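(* Let $G$ be a connected graph of order $n\ge 2$. Then $F_c(G)=n-1$ if and only if $G$ is the complete graph $K_n$ (with $n\ge 2$) or the star $K_{1,n-1}$ with $n\ge 4$.
   Context: Forcing process: given a set of initially colored vertices, at each step a colored vertex with exactly one non-colored neighbor forces (colors) that neighbor. A set $S\subseteq V(G)$ is a forcing set if iterating this process from $S$ eventually colors all vertices; it is a connected forcing set if moreover the induced subgraph $G[S]$ is connected. $F_c(G)$, the connected forcing number, is the minimum cardinality of a connected forcing set of $G$. *)

theory Defs
  imports Main
begin

definition simple_graph :: "'a set \<Rightarrow> ('a \<Rightarrow> 'a \<Rightarrow> bool) \<Rightarrow> bool" where
  "simple_graph V E \<longleftrightarrow> finite V \<and> (\<forall>u v. E u v \<longrightarrow> u \<in> V \<and> v \<in> V)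
     \<and> (\<forall>u v. E u v \<longrightarrow> E v u) \<and> (\<forall>u. \<not> E u u)"

definition induced_connected :: "('a \<Rightarrow> 'a \<Rightarrow> bool) \<Rightarrow> 'a set \<Rightarrow> bool" where
  "induced_connected E S \<longleftrightarrow> S \<noteq> {} \<and>
     (\<forall>u\<in>S. \<forall>v\<in>S. (\<lambda>x y. x \<in> S \<and> y \<in> S \<and> E x y)\<^sup>*\<^sup>* u v)"

definition connected_graph :: "'a set \<Rightarrow> ('a \<Rightarrow> 'a \<Rightarrow> bool) \<Rightarrow> bool" where
  "connected_graph V E \<longleftrightarrow> induced_connected E V"

inductive_set forced :: "('a \<Rightarrow> 'a \<Rightarrow> bool) \<Rightarrow> 'a set \<Rightarrow> 'a set" for E S where
  init: "v \<in> S \<Longrightarrow> v \<in> forced E S"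
| force: "\<lbrakk> u \<in> forced E S; E u w; \<forall>x. E u x \<and> x \<noteq> w \<longrightarrow> x \<in> forced E S \<rbrakk>
           \<Longrightarrow> w \<in> forced E S"

definition forcing_set :: "'a set \<Rightarrow> ('a \<Rightarrow> 'a \<Rightarrow> bool) \<Rightarrow> 'a set \<Rightarrow> bool" where
  "forcing_set V E S \<longleftrightarrow> S \<subseteq> V \<and> V \<subseteq> forced E S"

definition connected_forcing_set :: "'a set \<Rightarrow> ('a \<Rightarrow> 'a \<Rightarrow> bool) \<Rightarrow> 'a set \<Rightarrow> bool" where
  "connected_forcing_set V E S \<longleftrightarrow> forcing_set V E S \<and> induced_connected E S"

definition connected_forcing_number :: "'a set \<Rightarrow> ('a \<Rightarrow> 'a \<Rightarrow> bool) \<Rightarrow> nat" where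
  "connected_forcing_number V E = Min {card S | S. connected_forcing_set V E S}"

definition is_complete :: "'a set \<Rightarrow> ('a \<Rightarrow> 'a \<Rightarrow> bool) \<Rightarrow> bool" where
  "is_complete V E \<longleftrightarrow> (\<forall>u\<in>V. \<forall>v\<in>V. u \<noteq> v \<longrightarrow> E u v)"

definition is_star :: "'a set \<Rightarrow> ('a \<Rightarrow> 'a \<Rightarrow> bool) \<Rightarrow> bool" where
  "is_star V E \<longleftrightarrow> (\<exists>c\<in>V. \<forall>u\<in>V. \<forall>v\<in>V. u \<noteq> v \<longrightarrow> (E u v \<longleftrightarrow> u = c \<or> v = c))"

end

theory Submission
  imports Defs
begin

lemma rt_sym:
  assumes "\<forall>u v. E u v \<longrightarrow> E v u" "(\<lambda>x y. x\<in>S \<and> y\<in>S \<and> E x y)\<^sup>*\<^sup>* a b"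
  shows "(\<lambda>x y. x\<in>S \<and> y\<in>S \<and> E x y)\<^sup>*\<^sup>* b a"
proof -
  have "symp (\<lambda>x y. x\<in>S \<and> y\<in>S \<and> E x y)" using assms(1) by (auto intro: sympI)
  then show ?thesis using assms(2) by (metis sympD symp_rtranclp)
qed

lemma conn_rank:
  fixes f :: "'a \<Rightarrow> nat"
  assumes sym: "\<forall>u v. E u v \<longrightarrow> E v u" and r: "r \<in> S"
    and step: "\<forall>v\<in>S. v \<noteq> r \<longrightarrow> (\<exists>w\<in>S. E w v \<and> f w < f v)"
  shows "induced_connected E S"
proof -
  let ?R = "\<lambda>x y. x\<in>S \<and> y\<in>S \<and> E x y"
  have A: "\<forall>v. v \<in> S \<longrightarrow> f v = n \<longrightarrow> ?R\<^sup>*\<^sup>* r v" for n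
  proof (induction n rule: less_induct)
    case (less n)
    show ?case
    proof (intro allI impI)
      fix v assume v: "v \<in> S" "f v = n"
      show "?R\<^sup>*\<^sup>* r v"
      proof (cases "v = r")
        case True thus ?thesis by simp
      next
        case False
        then obtain w where w: "w\<in>S" "E w v" "f w < f v" using step v by blast
        then have "?R\<^sup>*\<^sup>* r w" using less v by blast
        then show ?thesis using w v by (rule_tac rtranclp.rtrancl_into_rtrancl) auto
      qed
    qed
  qed
  show ?thesis unfolding induced_connected_def
  proof (intro conjI ballI)
    show "S \<noteq> {}" using r by auto
    fix u v assume uv: "u\<in>S" "v\<in>S"
    then have "?R\<^sup>*\<^sup>* u r" using A rt_sym[OF sym] by blast
    moreover have "?R\<^sup>*\<^sup>* r v" using A uv by blast
    ultimately show "?R\<^sup>*\<^sup>* u v" by (rule rtranclp_trans)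
  qed
qed

locale cg =
  fixes V :: "'a set" and E :: "'a \<Rightarrow> 'a \<Rightarrow> bool"
  assumes sg: "simple_graph V E" and cn: "connected_graph V E"
begin

lemma fin: "finite V" using sg by (simp add: simple_graph_def)
lemma inV: "E u v \<Longrightarrow> u \<in> V \<and> v \<in> V" using sg by (simp add: simple_graph_def)
lemma sym: "E u v \<Longrightarrow> E v u" using sg by (simp add: simple_graph_def)
lemma symA: "\<forall>u v. E u v \<longrightarrow> E v u" using sym by blast
lemma irr: "\<not> E u u" using sg by (simp add: simple_graph_def)

lemma conn: "u\<in>V \<Longrightarrow> v\<in>V \<Longrightarrow> E\<^sup>*\<^sup>* u v"
proof -
  assume "u\<in>V" "v\<in>V"
  then have "(\<lambda>x y. x\<in>V \<and> y\<in>V \<and> E x y)\<^sup>*\<^sup>* u v"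
    using cn by (simp add: connected_graph_def induced_connected_def)
  then show ?thesis by (induct rule: rtranclp_induct) auto
qed

lemma Vne: "V \<noteq> {}" using cn by (simp add: connected_graph_def induced_connected_def)

lemma has_nb: "y \<in> V \<Longrightarrow> x \<in> V \<Longrightarrow> x \<noteq> y \<Longrightarrow> \<exists>z. E z y"
proof -
  assume a: "y \<in> V" "x \<in> V" "x \<noteq> y"
  have "E\<^sup>*\<^sup>* y x" using conn a by blast
  then show ?thesis using a(3)
    by (cases rule: converse_rtranclpE) (auto intro: sym)
qed

definition dd :: "'a \<Rightarrow> 'a \<Rightarrow> nat" where "dd r v = (LEAST k. (E^^k) r v)"

lemma dd_path: "r\<in>V \<Longrightarrow> v\<in>V \<Longrightarrow> (E^^(dd r v)) r v"
  unfolding dd_def by (metis LeastI_ex conn rtranclp_power)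

lemma dd_le: "(E^^k) r v \<Longrightarrow> dd r v \<le> k"
  unfolding dd_def by (rule Least_le)

lemma dd_r: "dd r r = 0"
  using dd_le[of 0 r r] by simp

lemma dd_0: "r\<in>V \<Longrightarrow> v \<in>V \<Longrightarrow> dd r v = 0 \<Longrightarrow> v = r"
  using dd_path[of r v] by simp

lemma dd_edge: "r\<in>V \<Longrightarrow> E u v \<Longrightarrow> dd r v \<le> Suc (dd r u)"
  by (meson dd_le dd_path inV relpowp_Suc_I)

lemma dd_edge2: "r\<in>V \<Longrightarrow> E u v \<Longrightarrow> dd r u \<le> Suc (dd r v)"
  using dd_edge sym by blast

lemma dd_parent: "r\<in>V \<Longrightarrow> v\<in>V \<Longrightarrow> v\<noteq>r \<Longrightarrow> \<exists>u. E u v \<and> Suc (dd r u) = dd r v"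
proof -
  assume a: "r\<in>V" "v\<in>V" "v\<noteq>r"
  then obtain k where k: "dd r v = Suc k" using dd_0 by (cases "dd r v") auto
  then have "(E^^Suc k) r v" using dd_path a by metis
  then obtain u where u: "(E^^k) r u" "E u v" by (rule relpowp_Suc_E)
  have "dd r u \<le> k" using dd_le u by blast
  moreover have "dd r v \<le> Suc (dd r u)" using dd_edge a u by blast
  ultimately show ?thesis using u k by auto
qed

lemma dd_one: "r\<in>V \<Longrightarrow> E r v \<Longrightarrow> dd r v = 1"
  using dd_edge[of r r v] dd_r dd_0[of r v] irr inV by fastforce

lemma good_pair:
  assumes "x\<in>V" "y\<in>V" "x\<noteq>y" "u\<in>V" "u\<noteq>x" "u\<noteq>y" "E u x" "\<not>E u y"
    "induced_connected E (V-{x,y})"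
  shows "connected_forcing_set V E (V-{x,y})"
proof -
  have S: "V-{x,y} \<subseteq> forced E (V-{x,y})" by (auto intro: forced.init)
  have X: "x \<in> forced E (V-{x,y})"
  proof (rule forced.force[of u])
    show "u \<in> forced E (V-{x,y})" using S assms by auto
    show "E u x" by fact
    show "\<forall>z. E u z \<and> z \<noteq> x \<longrightarrow> z \<in> forced E (V - {x, y})"
      using S assms inV by blast
  qed
  obtain z where z: "E z y" using has_nb assms by blast
  have zf: "z \<in> forced E (V-{x,y})" using z X S inV irr by blast
  have Y: "y \<in> forced E (V-{x,y})"
  proof (rule forced.force[OF zf z])
    show "\<forall>w. E z w \<and> w \<noteq> y \<longrightarrow> w \<in> forced E (V - {x, y})"
      using S X inV by blast
  qed
  show ?thesis unfolding connected_forcing_set_def forcing_set_def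
    using S X Y assms(9) by blast
qed


lemma two_elems: "finite A \<Longrightarrow> 2 \<le> card A \<Longrightarrow> \<exists>a b. a\<in>A \<and> b\<in>A \<and> a\<noteq>b"
proof -
  assume f: "finite A" and c: "2 \<le> card A"
  then obtain a where a: "a \<in> A" by fastforce
  have "card (A - {a}) \<ge> 1" using c a f by (simp add: card_Diff_singleton)
  then have "A - {a} \<noteq> {}" by (metis card.empty not_one_le_zero)
  then obtain b where "b \<in> A - {a}" by blast
  then show ?thesis using a by blast
qed

lemma closure:
  assumes "S \<subseteq> T" and cl: "\<forall>u\<in>T. \<forall>w. E u w \<and> w \<notin> T \<longrightarrow> (\<exists>z. z \<noteq> w \<and> E u z \<and> z \<notin> T)"
  shows "forced E S \<subseteq> T"
proof
  fix w assume "w \<in> forced E S"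
  then show "w \<in> T"
  proof (induct rule: forced.induct)
    case (init v) then show ?case using assms(1) by blast
  next
    case (force u w)
    show ?case
    proof (rule ccontr)
      assume "w \<notin> T"
      then obtain z where "z \<noteq> w" "E u z" "z \<notin> T" using cl force by blast
      then show False using force by blast
    qed
  qed
qed

lemma lb_T:
  assumes cfs: "connected_forcing_set V E S" and ST: "S \<subseteq> T"
    and cl: "\<forall>u\<in>T. \<forall>w. E u w \<and> w \<notin> T \<longrightarrow> (\<exists>z. z \<noteq> w \<and> E u z \<and> z \<notin> T)"
    and ne: "V - T \<noteq> {}"
  shows False
proof -
  have "V \<subseteq> forced E S" using cfs by (simp add: connected_forcing_set_def forcing_set_def)
  then show False using closure[OF ST cl] ne by blast
qed

lemma cfs_sub: "connected_forcing_set V E S \<Longrightarrow> S \<subseteq> V"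
  by (simp add: connected_forcing_set_def forcing_set_def)

lemma complete_lb:
  assumes comp: "is_complete V E" and cfs: "connected_forcing_set V E S"
  shows "card V - 1 \<le> card S"
proof (rule ccontr)
  assume nt: "\<not> card V - 1 \<le> card S"
  have SV: "S \<subseteq> V" using cfs_sub cfs by blast
  have "card (V - S) = card V - card S" using card_Diff_subset[OF finite_subset[OF SV fin] SV] .
  then have "2 \<le> card (V - S)" using nt card_mono[OF fin SV] by linarith
  then obtain a b where ab: "a \<in> V - S" "b \<in> V - S" "a \<noteq> b" using two_elems fin by blast
  show False
  proof (rule lb_T[OF cfs subset_refl])
    show "V - S \<noteq> {}" using ab by blast
    show "\<forall>u\<in>S. \<forall>w. E u w \<and> w \<notin> S \<longrightarrow> (\<exists>z. z \<noteq> w \<and> E u z \<and> z \<notin> S)"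
    proof (intro ballI allI impI)
      fix u w assume u: "u \<in> S" "E u w \<and> w \<notin> S"
      have "E u a" "E u b" using comp ab u SV unfolding is_complete_def by auto
      then show "\<exists>z. z \<noteq> w \<and> E u z \<and> z \<notin> S" using ab
        proof (cases "a = w")
          case True then show ?thesis using ab \<open>E u b\<close> by (intro exI[of _ b]) simp
        next
          case False then show ?thesis using ab \<open>E u a\<close> by (intro exI[of _ a]) simp
        qed
    qed
  qed
qed

lemma star_lb:
  assumes c: "c \<in> V" and st: "\<forall>u\<in>V. \<forall>v\<in>V. u \<noteq> v \<longrightarrow> (E u v \<longleftrightarrow> u = c \<or> v = c)"
    and n4: "card V \<ge> 4" and cfs: "connected_forcing_set V E S"
  shows "card V - 1 \<le> card S"
proof (rule ccontr)
  assume lt: "\<not> ?thesis"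
  have SV: "S \<subseteq> V" using cfs_sub cfs by blast
  let ?T = "S \<union> {c}"
  have TV: "?T \<subseteq> V" using SV c by blast
  have cT: "card ?T \<le> card V - 2"
  proof (cases "c \<in> S")
    case True then have "?T = S" by blast
    then show ?thesis using lt by simp
  next
    case False
    have "card S \<le> Suc 0"
    proof (subst card_le_Suc0_iff_eq[OF finite_subset[OF SV fin]], intro ballI)
      fix a b assume ab: "a \<in> S" "b \<in> S"
      have "(\<lambda>x y. x\<in>S \<and> y\<in>S \<and> E x y)\<^sup>*\<^sup>* a b"
        using cfs ab by (simp add: connected_forcing_set_def induced_connected_def)
      then show "a = b"
      proof (induct rule: rtranclp_induct)
        case base then show ?case by simp
      next
        case (step y z)
        then have "y \<noteq> z" using irr by blast
        then show ?case using step st SV False by blast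
      qed
    qed
    moreover have "card ?T \<le> card S + 1" by (simp add: card_insert_le_m1)
    ultimately show ?thesis using n4 by linarith
  qed
  have "card (V - ?T) = card V - card ?T" using card_Diff_subset[OF finite_subset[OF TV fin] TV] .
  then have "2 \<le> card (V - ?T)" using cT n4 by linarith
  then obtain a b where ab: "a \<in> V - ?T" "b \<in> V - ?T" "a \<noteq> b" using two_elems fin by blast
  show False
  proof (rule lb_T[OF cfs _ _])
    show "S \<subseteq> ?T" by blast
    show "V - ?T \<noteq> {}" using ab by blast
    show "\<forall>u\<in>?T. \<forall>w. E u w \<and> w \<notin> ?T \<longrightarrow> (\<exists>z. z \<noteq> w \<and> E u z \<and> z \<notin> ?T)"
    proof (intro ballI allI impI)
      fix u w assume u: "u \<in> ?T" "E u w \<and> w \<notin> ?T"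
      show "\<exists>z. z \<noteq> w \<and> E u z \<and> z \<notin> ?T"
      proof (cases "u = c")
        case True
        have "E u a" "E u b" using st ab True c by auto
        then show ?thesis using ab
        proof (cases "a = w")
          case True then show ?thesis using ab \<open>E u b\<close> by (intro exI[of _ b]) simp
        next
          case False then show ?thesis using ab \<open>E u a\<close> by (intro exI[of _ a]) simp
        qed
      next
        case False
        have "u \<in> V" "w \<in> V" "u \<noteq> w" using u inV irr by blast+
        then have "w = c" using st u False by blast
        then show ?thesis using u by blast
      qed
    qed
  qed
qed

lemma univ_ub:
  assumes r: "r \<in> V" and x: "x \<in> V" "x \<noteq> r" and un: "\<forall>v\<in>V. v \<noteq> r \<longrightarrow> E r v"
  shows "connected_forcing_set V E (V - {x})"
proof -
  have IC: "induced_connected E (V - {x})"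
    by (rule conn_rank[OF symA, of r _ "\<lambda>v. if v = r then 0 else (1::nat)"]) (use r x un in auto)
  have S: "V - {x} \<subseteq> forced E (V - {x})" by (auto intro: forced.init)
  have X: "x \<in> forced E (V - {x})"
  proof (rule forced.force[of r])
    show "r \<in> forced E (V - {x})" using S r x by blast
    show "E r x" using un x by blast
    show "\<forall>z. E r z \<and> z \<noteq> x \<longrightarrow> z \<in> forced E (V - {x})" using S inV by blast
  qed
  show ?thesis unfolding connected_forcing_set_def forcing_set_def using IC S X by blast
qed

definition cfn where "cfn = connected_forcing_number V E"

lemma cfn_eq:
  assumes lb: "\<forall>S. connected_forcing_set V E S \<longrightarrow> k \<le> card S"
    and ex: "connected_forcing_set V E S0" "card S0 = k"
  shows "connected_forcing_number V E = k"
proof -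
  let ?A = "{card S | S. connected_forcing_set V E S}"
  have fA: "finite ?A"
    by (rule finite_subset[of _ "{..card V}"]) (auto dest: cfs_sub intro: card_mono[OF fin])
  have "k \<in> ?A" using ex by blast
  then have "Min ?A \<le> k" using fA by simp
  moreover have "k \<le> Min ?A" using fA \<open>k \<in> ?A\<close> lb by (subst Min_ge_iff) auto
  ultimately show ?thesis unfolding connected_forcing_number_def by simp
qed

lemma cfn_le:
  assumes "connected_forcing_set V E S0"
  shows "connected_forcing_number V E \<le> card S0"
proof -
  let ?A = "{card S | S. connected_forcing_set V E S}"
  have fA: "finite ?A"
    by (rule finite_subset[of _ "{..card V}"]) (auto dest: cfs_sub intro: card_mono[OF fin])
  then show ?thesis unfolding connected_forcing_number_def using assms by (intro Min_le) auto
qed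

lemma single_ic: "b \<in> V \<Longrightarrow> induced_connected E {b}"
  by (simp add: induced_connected_def)

lemma hard:
  assumes n2: "card V \<ge> 2" and nc: "\<not> is_complete V E" and ns: "\<not> (is_star V E \<and> card V \<ge> 4)"
  shows "\<exists>x y u. x\<in>V \<and> y\<in>V \<and> x\<noteq>y \<and> u\<in>V \<and> u\<noteq>x \<and> u\<noteq>y \<and> E u x \<and> \<not>E u y \<and> induced_connected E (V-{x,y})"
proof (rule ccontr)
  assume nex: "\<not> ?thesis"
  have F: "E u x \<longleftrightarrow> E u y" if "x\<in>V" "y\<in>V" "x\<noteq>y" "induced_connected E (V-{x,y})"
     "u\<in>V" "u\<noteq>x" "u\<noteq>y" for x y u
  proof -
    have "V-{y,x} = V-{x,y}" by blast
    then show ?thesis using nex that by metis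
  qed
  show False
  proof (cases "\<exists>r\<in>V. \<forall>v\<in>V. v \<noteq> r \<longrightarrow> E r v")
    case True
    then obtain r where r: "r \<in> V" "\<forall>v\<in>V. v \<noteq> r \<longrightarrow> E r v" by blast
    have IC: "induced_connected E (V-{x,y})" if "x \<noteq> r" "y \<noteq> r" for x y
      by (rule conn_rank[OF symA, of r _ "\<lambda>v. if v = r then 0 else (1::nat)"]) (use r that in auto)
    have TW: "E u x \<longleftrightarrow> E u y" if "x\<in>V" "y\<in>V" "x\<noteq>y" "x\<noteq>r" "y\<noteq>r" "u\<in>V" "u\<noteq>x" "u\<noteq>y" for x y u
      using F IC that by blast
    show False
    proof (cases "\<exists>a b. a\<in>V \<and> b\<in>V \<and> a\<noteq>r \<and> b\<noteq>r \<and> a\<noteq>b \<and> E a b")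
      case True
      then obtain a b where ab: "a\<in>V" "b\<in>V" "a\<noteq>r" "b\<noteq>r" "a\<noteq>b" "E a b" by blast
      have Ea: "E a z" if "z\<in>V" "z\<noteq>r" "z\<noteq>a" for z
      proof (cases "z = b")
        case True then show ?thesis using ab by simp
      next
        case False then show ?thesis using TW[of b z a] ab that by blast
      qed
      have "is_complete V E" unfolding is_complete_def
      proof (intro ballI impI)
        fix u v assume uv: "u\<in>V" "v\<in>V" "u\<noteq>v"
        show "E u v"
        proof (cases "u = r \<or> v = r")
          case True then show ?thesis using r(2) uv sym[of r u] sym[of r v] by fastforce
        next
          case False
          show ?thesis
          proof (cases "u = a \<or> v = a")
            case True then show ?thesis using Ea[of u] Ea[of v] uv False sym[of a u] sym[of a v] by fastforce
          next
            case False2: False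
            have "E u a" using Ea[of u] uv False False2 sym[of a u] by blast
            then show ?thesis using TW[of v a u] uv False False2 ab by blast
          qed
        qed
      qed
      then show False using nc by blast
    next
      case False
      have st: "\<forall>u\<in>V. \<forall>v\<in>V. u \<noteq> v \<longrightarrow> (E u v \<longleftrightarrow> u = r \<or> v = r)"
      proof (intro ballI impI)
        fix u v assume uv: "u\<in>V" "v\<in>V" "u \<noteq> v"
        show "E u v \<longleftrightarrow> u = r \<or> v = r"
        proof (cases "u = r \<or> v = r")
          case True then show ?thesis using r(2) uv sym[of r u] sym[of r v] by fastforce
        next
          case F2: False then show ?thesis using False uv by blast
        qed
      qed
      then have "is_star V E" unfolding is_star_def using r by blast
      then have c3: "card V \<le> 3" using ns by simp
      obtain a where a: "a \<in> V" "a \<noteq> r"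
        using two_elems[OF fin n2] by blast
      show False
      proof (cases "card V = 2")
        case True
        have "card (V - {r}) = 1" using True r fin by simp
        then obtain z where z: "V - {r} = {z}" using card_1_singletonE by blast
        have "is_complete V E" unfolding is_complete_def
        proof (intro ballI impI)
          fix u v assume uv: "u\<in>V" "v\<in>V" "u \<noteq> v"
          show "E u v"
          proof (cases "u = r")
            case True then show ?thesis using r(2) uv by fastforce
          next
            case F1: False
            show ?thesis
            proof (cases "v = r")
              case True then show ?thesis using r(2) uv sym[of r u] by fastforce
            next
              case False
              then have "u \<in> V - {r}" "v \<in> V - {r}" using uv F1 by auto
              then have "u = z" "v = z" using z by auto
              then show ?thesis using uv(3) by simp
            qed
          qed
        qed
        then show False using nc by blast
      next
        case False
        then have "card (V - {r, a}) = 1" using c3 n2 r a fin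
          by (simp add: card_Diff_subset)
        then obtain b where b: "V - {r, a} = {b}" using card_1_singletonE by blast
        then have bV: "b \<in> V" "b \<noteq> r" "b \<noteq> a" by auto
        have "induced_connected E (V - {r, a})" using b single_ic bV by simp
        then have "E b r \<longleftrightarrow> E b a" using F[of r a b] r a bV by blast
        moreover have "E b r" using r(2) bV sym[of r b] by blast
        moreover have "\<not> E b a" using st bV a by blast
        ultimately show False by blast
      qed
    qed
  next
    case False
    then have nu: "\<forall>r\<in>V. \<exists>t\<in>V. t \<noteq> r \<and> \<not> E r t" by blast
    define deg where "deg v = card {w\<in>V. E v w}" for v
    obtain r where r: "r \<in> V" "\<forall>v\<in>V. deg v \<le> deg r"
    proof -
      have "Max (deg ` V) \<in> deg ` V" using fin Vne by simp
      then obtain r where "r \<in> V" "deg r = Max (deg ` V)" by auto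
      moreover have "\<forall>v\<in>V. deg v \<le> Max (deg ` V)" using fin by simp
      ultimately show ?thesis using that by metis
    qed
    define d where "d = dd r"
    define D where "D = Max (d ` V)"
    have dle: "d v \<le> D" if "v \<in> V" for v using fin that unfolding D_def by simp
    obtain x where x: "x \<in> V" "d x = D"
    proof -
      have "D \<in> d ` V" using fin Vne unfolding D_def by simp
      then show ?thesis using that by auto
    qed
    have d0: "v = r" if "v\<in>V" "d v = 0" for v using dd_0 r that unfolding d_def by blast
    have dr: "d r = 0" unfolding d_def by (rule dd_r)
    have ded: "d v \<le> Suc (d u)" if "E u v" for u v using dd_edge r that unfolding d_def by blast
    have par: "\<exists>p. E p v \<and> Suc (d p) = d v" if "v\<in>V" "v\<noteq>r" for v
      using dd_parent r that unfolding d_def by blast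
    have D2: "D \<ge> 2"
    proof -
      obtain t where t: "t\<in>V" "t\<noteq>r" "\<not> E r t" using nu r by blast
      have "d t \<noteq> 0" using d0 t by blast
      moreover have "d t \<noteq> 1"
      proof
        assume "d t = 1"
        then obtain p where "E p t" "Suc (d p) = 1" using par t by fastforce
        then have "p = r" using d0 inV by fastforce
        then show False using t \<open>E p t\<close> by blast
      qed
      moreover have "d t \<le> D" using dle t(1) by blast
      ultimately show ?thesis by linarith
    qed
    have xr: "x \<noteq> r" using x dr D2 by auto
    have RM: "induced_connected E (V-{a,b})" if "a\<in>V" "b\<in>V" "a\<noteq>r" "b\<noteq>r"
      "\<forall>v\<in>V-{a,b}. v\<noteq>r \<longrightarrow> (\<exists>w\<in>V-{a,b}. E w v \<and> d w < d v)" for a b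
      by (rule conn_rank[OF symA, of r _ d]) (use that r in auto)
    have TW: "E u x \<longleftrightarrow> E u v" if "v\<in>V" "d v = D" "v\<noteq>x" "u\<in>V" "u\<noteq>x" "u\<noteq>v" for v u
    proof -
      have "induced_connected E (V-{x,v})"
      proof (rule RM)
        show "v \<noteq> r" using that dr D2 by auto
        show "\<forall>z\<in>V-{x,v}. z\<noteq>r \<longrightarrow> (\<exists>w\<in>V-{x,v}. E w z \<and> d w < d z)"
        proof (intro ballI impI)
          fix z assume z: "z \<in> V-{x,v}" "z \<noteq> r"
          obtain p where p: "E p z" "Suc (d p) = d z" using par z by blast
          have "d z \<le> D" using dle z by blast
          then have "p \<noteq> x" "p \<noteq> v" using p x that by auto
          then show "\<exists>w\<in>V-{x,v}. E w z \<and> d w < d z" using p inV by fastforce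
        qed
      qed (use x xr that in auto)
      then show ?thesis using F[of x v u] x that by blast
    qed
    have DEP: "\<exists>v\<in>V. v\<noteq>x \<and> E w v \<and> d v = Suc (d w) \<and> (\<forall>z. E z v \<and> d z < d v \<longrightarrow> z = w)"
      if w: "w\<in>V" "w\<noteq>r" "d w < D" for w
    proof -
      have wx: "w \<noteq> x" using w x by auto
      obtain q where q: "E q w" "Suc (d q) = d w" using par w by blast
      have qV: "q \<in> V" using q inV by blast
      have nqx: "\<not> E q x" using ded[of q x] q x w by auto
      have qx: "q \<noteq> x" "q \<noteq> w" using q x w irr by auto
      have nic: "\<not> induced_connected E (V-{x,w})"
      proof
        assume "induced_connected E (V-{x,w})"
        then have "E q x \<longleftrightarrow> E q w" using F[of x w q] x w wx qV qx by blast
        then show False using nqx q by blast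
      qed
      have "\<not>(\<forall>v\<in>V-{x,w}. v\<noteq>r \<longrightarrow> (\<exists>w'\<in>V-{x,w}. E w' v \<and> d w' < d v))"
        using RM[of x w] nic x(1) xr w(1,2) by blast
      then obtain v where v: "v \<in> V-{x,w}" "v\<noteq>r" "\<not>(\<exists>w'\<in>V-{x,w}. E w' v \<and> d w' < d v)"
        by blast
      have dvD: "d v \<le> D" using dle v(1) by blast
      obtain pv where pv: "E pv v" "Suc (d pv) = d v" using par v by blast
      have "pv \<in> V" using pv inV by blast
      then have "pv = x \<or> pv = w" using v pv by auto
      moreover have "pv \<noteq> x" using pv x dvD by auto
      ultimately have pw: "pv = w" by blast
      have uq: "\<forall>z. E z v \<and> d z < d v \<longrightarrow> z = w"
      proof (intro allI impI)
        fix z assume z: "E z v \<and> d z < d v"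
        have zx: "z \<noteq> x" using z x dvD by auto
        have zV: "z \<in> V" using z inV by blast
        show "z = w"
        proof (rule ccontr)
          assume "z \<noteq> w"
          then have "z \<in> V-{x,w}" using zx zV by blast
          then show False using v(3) z by blast
        qed
      qed
      have Ewv: "E w v" "d v = Suc (d w)" using pv pw by simp_all
      have vV: "v \<in> V" "v \<noteq> x" using v(1) by auto
      show ?thesis
      proof (rule bexI[of _ v])
        show "v \<noteq> x \<and> E w v \<and> d v = Suc (d w) \<and> (\<forall>z. E z v \<and> d z < d v \<longrightarrow> z = w)"
          using vV Ewv uq by simp
      qed (rule vV(1))
    qed
    have SING: "\<forall>w\<in>V. \<forall>w'\<in>V. d w = D - 1 - j \<longrightarrow> d w' = D - 1 - j \<longrightarrow> w = w'"
      if "j \<le> D - 2" for j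
      using that
    proof (induction j)
      case 0
      have base: "w = px" if w: "w\<in>V" "d w = D - 1" "E px x" "Suc (d px) = D" for w px
      proof -
        have wr: "w \<noteq> r" using w dr D2 by auto
        obtain v where v: "v\<in>V" "v\<noteq>x" "E w v" "d v = Suc (d w)" "\<forall>z. E z v \<and> d z < d v \<longrightarrow> z = w"
          using DEP[of w] w wr D2 by auto
        have dv: "d v = D" using v w D2 by auto
        have pxV: "px \<in> V" using w inV by blast
        have "px \<noteq> x" "px \<noteq> v" using w dv irr by auto
        then have "E px v" using TW[of v px] v dv pxV w by blast
        then show "w = px" using v w dv by auto
      qed
      obtain px where "E px x" "Suc (d px) = D" using par x xr by blast
      then show ?case using base by auto
    next
      case (Suc j)
      show ?case
      proof (intro ballI impI)
        fix w w' assume ww: "w\<in>V" "w'\<in>V" "d w = D - 1 - Suc j" "d w' = D - 1 - Suc j"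
        have wr: "w \<noteq> r" "w' \<noteq> r" using ww dr Suc.prems by auto
        have wD: "d w < D" "d w' < D" using ww D2 by auto
        obtain v where
          v: "v\<in>V" "E w v" "d v = Suc (d w)" "\<forall>z. E z v \<and> d z < d v \<longrightarrow> z = w"
          using DEP[OF ww(1) wr(1) wD(1)] by blast
        obtain v' where
          v': "v'\<in>V" "E w' v'" "d v' = Suc (d w')" "\<forall>z. E z v' \<and> d z < d v' \<longrightarrow> z = w'"
          using DEP[OF ww(2) wr(2) wD(2)] by blast
        have "d v = D - 1 - j" "d v' = D - 1 - j" using v v' ww Suc.prems by auto
        then have "v = v'" using Suc v v' by auto
        then show "w = w'" using v v' by auto
      qed
    qed
    have L1: "\<forall>w\<in>V. \<forall>w'\<in>V. d w = 1 \<longrightarrow> d w' = 1 \<longrightarrow> w = w'"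
      using SING[of "D - 2"] D2 by (simp add: numeral_2_eq_2)
    have degr: "deg r \<le> 1"
    proof -
      have fr: "finite {w\<in>V. E r w}" using fin by simp
      have "\<forall>a\<in>{w\<in>V. E r w}. \<forall>b\<in>{w\<in>V. E r w}. a = b"
        using L1 dd_one r unfolding d_def by auto
      then have "card {w\<in>V. E r w} \<le> Suc 0" using card_le_Suc0_iff_eq[OF fr] by blast
      then show ?thesis unfolding deg_def by simp
    qed
    obtain p where p: "E p x" "Suc (d p) = D" using par x xr by blast
    have pV: "p \<in> V" using p inV by blast
    have pr: "p \<noteq> r" using p dr D2 by auto
    obtain v where v: "v\<in>V" "v\<noteq>x" "E p v" "d v = Suc (d p)"
      using DEP[of p] pV pr p by auto
    obtain q where q: "E q p" "Suc (d q) = d p" using par pV pr by blast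
    have sub: "{x, v, q} \<subseteq> {w\<in>V. E p w}" using p v q x sym[of q p] inV by auto
    have "q \<noteq> x" "q \<noteq> v" using q p v x by auto
    then have "card {x, v, q} = 3" using v by auto
    then have "3 \<le> deg p" unfolding deg_def using card_mono[OF _ sub] fin by fastforce
    then show False using degr r pV by fastforce
  qed
qed
end

theorem theorem1:
  fixes V :: "'a set" and E :: "'a \<Rightarrow> 'a \<Rightarrow> bool"
  assumes "simple_graph V E" and "connected_graph V E" and "card V \<ge> 2"
  shows "connected_forcing_number V E = card V - 1 \<longleftrightarrow>
           is_complete V E \<or> (is_star V E \<and> card V \<ge> 4)"
proof -
  interpret cg V E using assms(1,2) by unfold_locales
  show ?thesis
  proof
    assume eq: "connected_forcing_number V E = card V - 1"
    show "is_complete V E \<or> (is_star V E \<and> card V \<ge> 4)"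
    proof (rule ccontr)
      assume nn: "\<not> ?thesis"
      then obtain x y u where xyu: "x\<in>V" "y\<in>V" "x\<noteq>y" "u\<in>V" "u\<noteq>x" "u\<noteq>y" "E u x" "\<not>E u y"
        "induced_connected E (V-{x,y})"
        using hard[OF assms(3)] by blast
      have "connected_forcing_set V E (V-{x,y})" by (rule good_pair[OF xyu])
      then have le: "connected_forcing_number V E \<le> card (V-{x,y})" by (rule cfn_le)
      have "card (V-{x,y}) = card V - card {x,y}"
        using xyu fin by (intro card_Diff_subset) auto
      then have "card (V-{x,y}) = card V - 2" using xyu by simp
      then show False using le eq assms(3) by linarith
    qed
  next
    assume h: "is_complete V E \<or> (is_star V E \<and> card V \<ge> 4)"
    show "connected_forcing_number V E = card V - 1"
    proof (cases "is_complete V E")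
      case True
      have "\<exists>a b. a\<in>V \<and> b\<in>V \<and> a\<noteq>b" by (rule two_elems[OF fin assms(3)])
      then obtain a b where ab: "a\<in>V" "b\<in>V" "a\<noteq>b" by blast
      have un: "\<forall>v\<in>V. v \<noteq> a \<longrightarrow> E a v" using True ab(1) unfolding is_complete_def by simp
      have c: "connected_forcing_set V E (V - {b})" by (rule univ_ub[OF ab(1) ab(2) _ un]) (use ab in simp)
      show ?thesis
      proof (rule cfn_eq[OF _ c])
        show "\<forall>S. connected_forcing_set V E S \<longrightarrow> card V - 1 \<le> card S"
          using complete_lb[OF True] by blast
        show "card (V - {b}) = card V - 1" using ab fin by simp
      qed
    next
      case False
      then have st: "is_star V E" "card V \<ge> 4" using h by simp_all
      then obtain c where c: "c \<in> V" "\<forall>u\<in>V. \<forall>v\<in>V. u \<noteq> v \<longrightarrow> (E u v \<longleftrightarrow> u = c \<or> v = c)"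
        unfolding is_star_def by blast
      have "\<exists>a b. a\<in>V \<and> b\<in>V \<and> a\<noteq>b" by (rule two_elems[OF fin assms(3)])
      then obtain a b where ab: "a\<in>V" "b\<in>V" "a\<noteq>b" by blast
      obtain l where l: "l \<in> V" "l \<noteq> c" using ab by blast
      have un: "\<forall>v\<in>V. v \<noteq> c \<longrightarrow> E c v" using c by simp
      have cf: "connected_forcing_set V E (V - {l})" using univ_ub[OF c(1) l un] .
      show ?thesis
      proof (rule cfn_eq[OF _ cf])
        show "\<forall>S. connected_forcing_set V E S \<longrightarrow> card V - 1 \<le> card S"
          using star_lb[OF c(1) c(2) st(2)] by blast
        show "card (V - {l}) = card V - 1" using l fin by simp
      qed
    qed
  qed
qed

end
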